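(* Let $\mathcal{X}$ be a connected $n$-premaniplex with base flag $x_0$ and $N=\operatorname{Stab}_{\mathcal{C}^n}(x_0)$, and let $(\mathcal{Y},\eta)$ be an $(n,m)$-voltage operator that preserves connectivity, with base flag $y_0$ of $\mathcal{Y}$, $L=\operatorname{Stab}_{\mathcal{C}^m}(y_0)$ and $\zeta:L\to\mathcal{C}^n$, $\zeta(\omega)=\eta(W_\omega(y_0))$. For $\upsilon\in\mathcal{C}^m$ let $\mathcal{Z}_\upsilon=\mathcal{C}^n/\zeta(L\cap L^\upsilon)$. If for every $\upsilon\in\mathcal{C}^m\setminus\operatorname{N}_{\mathcal{C}^m}(L)$ the premaniplex $\mathcal{X}$ does not cover $\mathcal{Z}_\upsilon$, then every automorphism of $\mathcal{X}\rtimes_\eta\mathcal{Y}$ is a lift of an automorphism of $\mathcal{Y}$.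
   Context: An $n$-premaniplex is an edge-coloured graph (semi-edges and parallel edges allowed) with colours $\{0,\dots,n-1\}$ such that every vertex (flag) is the start of exactly one dart of each colour, and for $|i-j|\ge2$ alternating $i,j$-paths of length 4 are closed; $x^i$ is the $i$-adjacent flag of $x$. $\mathcal{C}^n=\langle r_0,\dots,r_{n-1}\mid r_i^2,\ (r_ir_j)^2\ (|i-j|\ge2)\rangle$ acts on the left on flags by $r_ix=x^i$; automorphisms act on the right. A covering is a surjective map of flags preserving all adjacencies. $L^\upsilon=\upsilon^{-1}L\upsilon$ and $\operatorname{N}_{\mathcal{C}^m}(L)$ is the normaliser. For a subgroup $K\le\mathcal{C}^n$, $\mathcal{C}^n/K$ has flags the left cosets $\omega K$ with $(\omega K)^i=r_i\omega K$. For a flag $y$ of an $m$-premaniplex $\mathcal{Y}$ and $\omega\in\mathcal{C}^m$, $W_\omega(y)$ is the homotopy class of paths from $y$ whose colour sequence $i_1,\dots,i_k$ satisfies $r_{i_k}\cdots r_{i_1}=\omega$; these form the fundamental groupoid $\Pi(\mathcal{Y})$. A voltage assignment $\eta:\Pi(\mathcal{Y})\to\mathcal{C}^n$ satisfies $\eta(W_1W_2)=\eta(W_2)\eta(W_1)$; $(\mathcal{Y},\eta)$ is an $(n,m)$-voltage operator. $\mathcal{X}\rtimes_\eta\mathcal{Y}$ has flags $\mathcal{X}\times\mathcal{Y}$ and $(x,y)^i=(\eta(W_{r_i}(y))x,r_iy)$, $i\in\{0,\dots,m-1\}$. The operator preserves connectivity if $\mathcal{X}\rtimes_\eta\mathcal{Y}$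 is connected whenever $\mathcal{X}$ is. $\gamma\in\operatorname{Aut}(\mathcal{X}\rtimes_\eta\mathcal{Y})$ is a lift of $\tau\in\operatorname{Aut}(\mathcal{Y})$ if the $\mathcal{Y}$-coordinate of $(x,y)\gamma$ is $y\tau$ for all $(x,y)$. Standing convention: $\mathcal{Y}$ has a spanning tree all of whose darts have trivial voltage. *)

theory Defs
  imports Main
begin

text \<open>An element of C^n is represented by a word, i.e. a list [a1,...,ak] of colours
  a_j < n, standing for the product r_a1 r_a2 ... r_ak (leftmost factor first).\<close>

definition words :: "nat \<Rightarrow> nat list set" where
  "words n = {w. set w \<subseteq> {..<n}}"

inductive cox_eq :: "nat \<Rightarrow> nat list \<Rightarrow> nat list \<Rightarrow> bool" for n where
  refl:   "w \<in> words n \<Longrightarrow> cox_eq n w w"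
| sym:    "cox_eq n u v \<Longrightarrow> cox_eq n v u"
| trans:  "cox_eq n u v \<Longrightarrow> cox_eq n v w \<Longrightarrow> cox_eq n u w"
| cancel: "u \<in> words n \<Longrightarrow> v \<in> words n \<Longrightarrow> i < n \<Longrightarrow>
             cox_eq n (u @ [i, i] @ v) (u @ v)"
| comm:   "u \<in> words n \<Longrightarrow> v \<in> words n \<Longrightarrow> i < n \<Longrightarrow> j < n \<Longrightarrow>
             (i + 2 \<le> j \<or> j + 2 \<le> i) \<Longrightarrow>
             cox_eq n (u @ [i, j] @ v) (u @ [j, i] @ v)"

text \<open>Inverse of a word: since each generator is an involution, it is the reversed word.\<close>
definition word_inv :: "nat list \<Rightarrow> nat list" where
  "word_inv w = rev w"

text \<open>An n-premaniplex is given by a set of flags F and, for each colour i < n,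
  the i-adjacency map adj i (x \<mapsto> x^i), an involution of F (a fixed point is a
  semi-edge).\<close>

definition premaniplex :: "nat \<Rightarrow> 'a set \<Rightarrow> (nat \<Rightarrow> 'a \<Rightarrow> 'a) \<Rightarrow> bool" where
  "premaniplex n F adj \<longleftrightarrow>
     (\<forall>i<n. \<forall>x\<in>F. adj i x \<in> F \<and> adj i (adj i x) = x) \<and>
     (\<forall>i<n. \<forall>j<n. (i + 2 \<le> j \<or> j + 2 \<le> i) \<longrightarrow>
        (\<forall>x\<in>F. adj i (adj j (adj i (adj j x))) = x))"

fun act :: "(nat \<Rightarrow> 'a \<Rightarrow> 'a) \<Rightarrow> nat list \<Rightarrow> 'a \<Rightarrow> 'a" where
  "act adj [] x = x"
| "act adj (i # w) x = adj i (act adj w x)"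

definition connected_pm :: "nat \<Rightarrow> 'a set \<Rightarrow> (nat \<Rightarrow> 'a \<Rightarrow> 'a) \<Rightarrow> bool" where
  "connected_pm n F adj \<longleftrightarrow> (\<forall>x\<in>F. \<forall>x'\<in>F. \<exists>w\<in>words n. act adj w x = x')"

definition is_aut :: "nat \<Rightarrow> 'a set \<Rightarrow> (nat \<Rightarrow> 'a \<Rightarrow> 'a) \<Rightarrow> ('a \<Rightarrow> 'a) \<Rightarrow> bool" where
  "is_aut n F adj \<phi> \<longleftrightarrow> bij_betw \<phi> F F \<and> (\<forall>i<n. \<forall>x\<in>F. \<phi> (adj i x) = adj i (\<phi> x))"

definition is_covering :: "nat \<Rightarrow> 'a set \<Rightarrow> (nat \<Rightarrow> 'a \<Rightarrow> 'a) \<Rightarrow>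
                            'b set \<Rightarrow> (nat \<Rightarrow> 'b \<Rightarrow> 'b) \<Rightarrow> ('a \<Rightarrow> 'b) \<Rightarrow> bool" where
  "is_covering n F adj F' adj' f \<longleftrightarrow>
     f ` F = F' \<and> (\<forall>i<n. \<forall>x\<in>F. f (adj i x) = adj' i (f x))"

definition covers :: "nat \<Rightarrow> 'a set \<Rightarrow> (nat \<Rightarrow> 'a \<Rightarrow> 'a) \<Rightarrow>
                       'b set \<Rightarrow> (nat \<Rightarrow> 'b \<Rightarrow> 'b) \<Rightarrow> bool" where
  "covers n F adj F' adj' \<longleftrightarrow> (\<exists>f. is_covering n F adj F' adj' f)"

text \<open>For a set K of words (representing a subgroup of C^n), the flag of C^n/K
  given by the left coset \<omega>K is represented by the set of all words equal in C^n
  to \<omega>k for some k \<in> K.  (\<omega>K)^i = r_i \<omega> K.\<close>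

definition coset :: "nat \<Rightarrow> nat list set \<Rightarrow> nat list \<Rightarrow> nat list set" where
  "coset n K \<omega> = {\<omega>' \<in> words n. \<exists>k\<in>K. cox_eq n \<omega>' (\<omega> @ k)}"

definition coset_flags :: "nat \<Rightarrow> nat list set \<Rightarrow> nat list set set" where
  "coset_flags n K = {coset n K \<omega> | \<omega>. \<omega> \<in> words n}"

definition coset_adj :: "nat \<Rightarrow> nat \<Rightarrow> nat list set \<Rightarrow> nat list set" where
  "coset_adj n i C = {w' \<in> words n. \<exists>w\<in>C. cox_eq n w' (i # w)}"

text \<open>The fundamental groupoid of an m-premaniplex Y: the homotopy class W_\<omega>(y)
  is determined by its start flag y and \<omega> \<in> C^m; it ends at \<omega> y.  A voltage
  assignment is thus a map \<eta> y \<omega> = \<eta>(W_\<omega>(y)) \<in> C^n, well defined on C^m, with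
  \<eta>(W1 W2) = \<eta>(W2) \<eta>(W1); note W_\<omega>1(y) W_\<omega>2(\<omega>1 y) = W_(\<omega>2 \<omega>1)(y).\<close>

definition voltage_assignment ::
  "nat \<Rightarrow> nat \<Rightarrow> 'b set \<Rightarrow> (nat \<Rightarrow> 'b \<Rightarrow> 'b) \<Rightarrow> ('b \<Rightarrow> nat list \<Rightarrow> nat list) \<Rightarrow> bool" where
  "voltage_assignment n m FY adjY \<eta> \<longleftrightarrow>
     (\<forall>y\<in>FY. \<forall>w\<in>words m. \<eta> y w \<in> words n) \<and>
     (\<forall>y\<in>FY. \<forall>w\<in>words m. \<forall>w'\<in>words m. cox_eq m w w' \<longrightarrow> cox_eq n (\<eta> y w) (\<eta> y w')) \<and>
     (\<forall>y\<in>FY. \<forall>w1\<in>words m. \<forall>w2\<in>words m.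
        cox_eq n (\<eta> y (w2 @ w1)) (\<eta> (act adjY w1 y) w2 @ \<eta> y w1))"

text \<open>Spanning trees of Y, as sets of darts (y,i) (the dart of colour i from y to y^i):
  a reversal-closed dart set connecting all flags, minimal with that property.\<close>

definition darts :: "nat \<Rightarrow> 'b set \<Rightarrow> ('b \<times> nat) set" where
  "darts m FY = FY \<times> {..<m}"

definition dart_connects :: "(nat \<Rightarrow> 'b \<Rightarrow> 'b) \<Rightarrow> ('b \<times> nat) set \<Rightarrow> 'b set \<Rightarrow> bool" where
  "dart_connects adjY T FY \<longleftrightarrow>
     (\<forall>y\<in>FY. \<forall>y'\<in>FY. (\<lambda>a b. \<exists>i. (a, i) \<in> T \<and> b = adjY i a)\<^sup>*\<^sup>* y y')"

definition rev_closed :: "(nat \<Rightarrow> 'b \<Rightarrow> 'b) \<Rightarrow> ('b \<times> nat) set \<Rightarrow> bool" where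
  "rev_closed adjY T \<longleftrightarrow> (\<forall>(y, i)\<in>T. (adjY i y, i) \<in> T)"

definition spanning_tree :: "nat \<Rightarrow> 'b set \<Rightarrow> (nat \<Rightarrow> 'b \<Rightarrow> 'b) \<Rightarrow> ('b \<times> nat) set \<Rightarrow> bool" where
  "spanning_tree m FY adjY T \<longleftrightarrow>
     T \<subseteq> darts m FY \<and> rev_closed adjY T \<and> dart_connects adjY T FY \<and>
     (\<forall>T' \<subset> T. \<not> (rev_closed adjY T' \<and> dart_connects adjY T' FY))"

text \<open>(n,m)-voltage operator, including the standing convention that Y has a spanning
  tree all of whose darts have trivial voltage.\<close>

definition voltage_operator ::
  "nat \<Rightarrow> nat \<Rightarrow> 'b set \<Rightarrow> (nat \<Rightarrow> 'b \<Rightarrow> 'b) \<Rightarrow> ('b \<Rightarrow> nat list \<Rightarrow> nat list) \<Rightarrow> bool" where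
  "voltage_operator n m FY adjY \<eta> \<longleftrightarrow>
     premaniplex m FY adjY \<and> voltage_assignment n m FY adjY \<eta> \<and>
     (\<exists>T. spanning_tree m FY adjY T \<and> (\<forall>(y, i)\<in>T. cox_eq n (\<eta> y [i]) []))"

definition mix_flags :: "'a set \<Rightarrow> 'b set \<Rightarrow> ('a \<times> 'b) set" where
  "mix_flags FX FY = FX \<times> FY"

definition mix_adj :: "(nat \<Rightarrow> 'a \<Rightarrow> 'a) \<Rightarrow> (nat \<Rightarrow> 'b \<Rightarrow> 'b) \<Rightarrow> ('b \<Rightarrow> nat list \<Rightarrow> nat list) \<Rightarrow>
                       nat \<Rightarrow> 'a \<times> 'b \<Rightarrow> 'a \<times> 'b" where
  "mix_adj adjX adjY \<eta> i xy = (act adjX (\<eta> (snd xy) [i]) (fst xy), adjY i (snd xy))"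

text \<open>Every connected n-premaniplex is isomorphic to C^n/Stab(x0), which is
  countable, so it suffices (and is equivalent) to quantify over premaniplexes whose
  flags are natural numbers.\<close>

definition preserves_connectivity ::
  "nat \<Rightarrow> nat \<Rightarrow> 'b set \<Rightarrow> (nat \<Rightarrow> 'b \<Rightarrow> 'b) \<Rightarrow> ('b \<Rightarrow> nat list \<Rightarrow> nat list) \<Rightarrow> bool" where
  "preserves_connectivity n m FY adjY \<eta> \<longleftrightarrow>
     (\<forall>(FX :: nat set) adjX. premaniplex n FX adjX \<and> connected_pm n FX adjX \<longrightarrow>
        connected_pm m (mix_flags FX FY) (mix_adj adjX adjY \<eta>))"

definition is_lift :: "'a set \<Rightarrow> 'b set \<Rightarrow> ('a \<times> 'b \<Rightarrow> 'a \<times> 'b) \<Rightarrow> ('b \<Rightarrow> 'b) \<Rightarrow> bool" where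
  "is_lift FX FY \<gamma> \<tau> \<longleftrightarrow> (\<forall>x\<in>FX. \<forall>y\<in>FY. snd (\<gamma> (x, y)) = \<tau> y)"

definition stab :: "nat \<Rightarrow> (nat \<Rightarrow> 'b \<Rightarrow> 'b) \<Rightarrow> 'b \<Rightarrow> nat list set" where
  "stab m adj y0 = {w \<in> words m. act adj w y0 = y0}"

definition conj_set :: "nat \<Rightarrow> nat list set \<Rightarrow> nat list \<Rightarrow> nat list set" where
  "conj_set m L \<upsilon> = {w \<in> words m. \<upsilon> @ w @ word_inv \<upsilon> \<in> L}"

definition in_normaliser :: "nat \<Rightarrow> nat list set \<Rightarrow> nat list \<Rightarrow> bool" where
  "in_normaliser m L \<upsilon> \<longleftrightarrow> conj_set m L \<upsilon> = L"

end

theory Submission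
  imports Defs "HOL-Library.Countable"
begin


lemma words_Nil[simp]: "[] \<in> words n" by (simp add: words_def)
lemma words_Cons[simp]: "(i # w \<in> words n) = (i < n \<and> w \<in> words n)" by (auto simp: words_def)
lemma words_append[simp]: "(u @ v \<in> words n) = (u \<in> words n \<and> v \<in> words n)" by (auto simp: words_def)
lemma words_rev[simp]: "(rev w \<in> words n) = (w \<in> words n)" by (auto simp: words_def)

lemma cox_words: "cox_eq n u v \<Longrightarrow> u \<in> words n \<and> v \<in> words n"
  by (induction rule: cox_eq.induct) auto

lemma cox_cong: "cox_eq n u v \<Longrightarrow> p \<in> words n \<Longrightarrow> q \<in> words n \<Longrightarrow> cox_eq n (p @ u @ q) (p @ v @ q)"
proof (induction rule: cox_eq.induct)
  case (refl w) then show ?case by (simp add: cox_eq.refl)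
next
  case (sym u v) then show ?case by (blast intro: cox_eq.sym)
next
  case (trans u v w) then show ?case using cox_eq.trans by blast
next
  case (cancel u v i)
  have "cox_eq n ((p @ u) @ [i, i] @ (v @ q)) ((p @ u) @ (v @ q))"
    by (rule cox_eq.cancel) (use cancel in auto)
  then show ?case by simp
next
  case (comm u v i j)
  have "cox_eq n ((p @ u) @ [i, j] @ (v @ q)) ((p @ u) @ [j, i] @ (v @ q))"
    by (rule cox_eq.comm) (use comm in auto)
  then show ?case by simp
qed

lemma cox_cancel_rev: "g \<in> words n \<Longrightarrow> u \<in> words n \<Longrightarrow> cox_eq n (g @ rev g @ u) u"
proof (induction g arbitrary: u)
  case Nil then show ?case by (simp add: cox_eq.refl)
next
  case (Cons i g)
  have i: "i < n" and g: "g \<in> words n" using Cons.prems by auto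
  have 1: "cox_eq n (g @ rev g @ (i # u)) (i # u)" using Cons i by auto
  have 2: "cox_eq n ([i] @ (g @ rev g @ (i # u)) @ []) ([i] @ (i # u) @ [])"
    by (rule cox_cong[OF 1]) (use i in auto)
  have 3: "cox_eq n ([] @ [i, i] @ u) ([] @ u)" by (rule cox_eq.cancel) (use i Cons.prems in auto)
  have 2: "cox_eq n (i # g @ rev g @ i # u) (i # i # u)" using 2 by simp
  have 3: "cox_eq n (i # i # u) u" using 3 by simp
  show ?case using cox_eq.trans[OF 2 3] by simp
qed

lemma act_append: "act adj (u @ v) x = act adj u (act adj v x)"
  by (induction u) auto

lemma pm_in: "premaniplex n F adj \<Longrightarrow> i < n \<Longrightarrow> x \<in> F \<Longrightarrow> adj i x \<in> F"
  unfolding premaniplex_def by blast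

lemma pm_inv: "premaniplex n F adj \<Longrightarrow> i < n \<Longrightarrow> x \<in> F \<Longrightarrow> adj i (adj i x) = x"
  unfolding premaniplex_def by blast

lemma act_closed: "premaniplex n F adj \<Longrightarrow> w \<in> words n \<Longrightarrow> x \<in> F \<Longrightarrow> act adj w x \<in> F"
  by (induction w) (auto intro: pm_in)

lemma act_rev: "premaniplex n F adj \<Longrightarrow> w \<in> words n \<Longrightarrow> x \<in> F \<Longrightarrow> act adj (rev w) (act adj w x) = x"
proof (induction w)
  case Nil then show ?case by simp
next
  case (Cons i w)
  have z: "act adj w x \<in> F" using act_closed Cons.prems by auto
  have "adj i (adj i (act adj w x)) = act adj w x" using pm_inv[OF Cons.prems(1) _ z] Cons.prems by simp
  then show ?case using Cons by (simp add: act_append)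
qed

lemma act_rev2: "premaniplex n F adj \<Longrightarrow> w \<in> words n \<Longrightarrow> x \<in> F \<Longrightarrow> act adj w (act adj (rev w) x) = x"
  using act_rev[of n F adj "rev w" x] by simp

lemma far_comm: assumes "premaniplex n F adj" "i < n" "j < n" "i + 2 \<le> j \<or> j + 2 \<le> i" "x \<in> F"
  shows "adj i (adj j x) = adj j (adj i x)"
proof -
  have c: "\<And>k z. k < n \<Longrightarrow> z \<in> F \<Longrightarrow> adj k z \<in> F \<and> adj k (adj k z) = z" using pm_in[OF assms(1)] pm_inv[OF assms(1)] by blast
  have r: "adj i (adj j (adj i (adj j x))) = x" using assms unfolding premaniplex_def by blast
  have f1: "adj j (adj i (adj j x)) \<in> F" using c assms by blast
  have "adj i (adj i (adj j (adj i (adj j x)))) = adj i x" using r by simp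
  then have "adj j (adj i (adj j x)) = adj i x" using c[OF assms(2) f1] by simp
  then have "adj j (adj j (adj i (adj j x))) = adj j (adj i x)" by simp
  moreover have "adj i (adj j x) \<in> F" using c assms by blast
  ultimately show ?thesis using c[OF assms(3)] by metis
qed

lemma act_cox: "cox_eq n u v \<Longrightarrow> premaniplex n F adj \<Longrightarrow> x \<in> F \<Longrightarrow> act adj u x = act adj v x"
proof (induction rule: cox_eq.induct)
  case (cancel u v i)
  have z: "act adj v x \<in> F" using act_closed[OF cancel.prems(1) cancel.hyps(2) cancel.prems(2)] .
  have "adj i (adj i (act adj v x)) = act adj v x" using pm_inv[OF cancel.prems(1) cancel.hyps(3) z] .
  then show ?case by (simp add: act_append)
next
  case (comm u v i j)
  have z: "act adj v x \<in> F" using act_closed[OF comm.prems(1) comm.hyps(2) comm.prems(2)] .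
  have "adj i (adj j (act adj v x)) = adj j (adj i (act adj v x))"
    using far_comm[OF comm.prems(1) comm.hyps(3) comm.hyps(4) comm.hyps(5) z] .
  then show ?case by (simp add: act_append)
next
  case (sym u v) then show ?case by metis
next
  case (trans u v w) then show ?case by metis
qed simp

lemma act_mix:
  assumes X: "premaniplex n FX adjX" and Y: "premaniplex m FY adjY"
    and V: "voltage_assignment n m FY adjY \<eta>"
    and w: "w \<in> words m" and x: "x \<in> FX" and y: "y \<in> FY"
  shows "act (mix_adj adjX adjY \<eta>) w (x, y) = (act adjX (\<eta> y w) x, act adjY w y)"
  using w
proof (induction w)
  case Nil
  have V3: "\<And>y w1 w2. y \<in> FY \<Longrightarrow> w1 \<in> words m \<Longrightarrow> w2 \<in> words m \<Longrightarrow>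
     cox_eq n (\<eta> y (w2 @ w1)) (\<eta> (act adjY w1 y) w2 @ \<eta> y w1)"
    using V unfolding voltage_assignment_def by blast
  define e where "e = \<eta> y []"
  have ew: "e \<in> words n" using V y by (auto simp: voltage_assignment_def e_def)
  have c: "cox_eq n e (e @ e)" using V3[of y "[]" "[]"] y by (simp add: e_def)
  define z where "z = act adjX e x"
  have z: "z \<in> FX" using act_closed[OF X ew x] z_def by simp
  have "act adjX e x = act adjX e z" using act_cox[OF c X x] by (simp add: act_append z_def)
  then have "act adjX (rev e) (act adjX e x) = act adjX (rev e) (act adjX e z)" by simp
  then have "x = z" using act_rev[OF X ew x] act_rev[OF X ew z] by simp
  then show ?case by (simp add: z_def e_def)
next
  case (Cons i w)
  have V3: "\<And>y w1 w2. y \<in> FY \<Longrightarrow> w1 \<in> words m \<Longrightarrow> w2 \<in> words m \<Longrightarrow>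
     cox_eq n (\<eta> y (w2 @ w1)) (\<eta> (act adjY w1 y) w2 @ \<eta> y w1)"
    using V unfolding voltage_assignment_def by blast
  have i: "i < m" and w: "w \<in> words m" using Cons.prems by auto
  have c: "cox_eq n (\<eta> y ([i] @ w)) (\<eta> (act adjY w y) [i] @ \<eta> y w)" using V3[OF y w, of "[i]"] i by simp
  have "act adjX (\<eta> y (i # w)) x = act adjX (\<eta> (act adjY w y) [i] @ \<eta> y w) x"
    using act_cox[OF c X x] by simp
  then show ?case using Cons.IH w by (simp add: mix_adj_def act_append)
qed

lemma snd_act_mix: "snd (act (mix_adj adjX adjY \<eta>) w p) = act adjY w (snd p)"
  by (induction w) (auto simp: mix_adj_def)

lemma aut_act:
  assumes "is_aut m P adj \<gamma>" "\<And>i p. i < m \<Longrightarrow> p \<in> P \<Longrightarrow> adj i p \<in> P"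
  shows "w \<in> words m \<Longrightarrow> p \<in> P \<Longrightarrow> \<gamma> (act adj w p) = act adj w (\<gamma> p) \<and> act adj w p \<in> P"
proof (induction w)
  case Nil then show ?case by simp
next
  case (Cons i w)
  then show ?case using assms unfolding is_aut_def by auto
qed

lemma tree_conn:
  assumes T: "spanning_tree m FY adjY T" and "y0 \<in> FY" "y \<in> FY"
  shows "\<exists>\<sigma>\<in>words m. act adjY \<sigma> y0 = y"
proof -
  have r: "(\<lambda>a b. \<exists>i. (a, i) \<in> T \<and> b = adjY i a)\<^sup>*\<^sup>* y0 y"
    using assms unfolding spanning_tree_def dart_connects_def by blast
  have Td: "T \<subseteq> FY \<times> {..<m}" using T unfolding spanning_tree_def darts_def by blast
  show ?thesis using r
  proof (induction rule: rtranclp_induct)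
    case base then show ?case by (intro bexI[of _ "[]"]) auto
  next
    case (step b c)
    then obtain \<sigma> where s: "\<sigma> \<in> words m" "act adjY \<sigma> y0 = b" by blast
    from step obtain i where ib: "(b, i) \<in> T" "c = adjY i b" by blast
    with Td have "i < m" by auto
    then show ?case using s ib by (intro bexI[of _ "i # \<sigma>"]) auto
  qed
qed



lemma zeta_surj:
  assumes VO: "voltage_operator n m FY adjY \<eta>" and PC: "preserves_connectivity n m FY adjY \<eta>"
    and y0: "y0 \<in> FY" and g: "g \<in> words n"
  shows "\<exists>\<omega>\<in>words m. act adjY \<omega> y0 = y0 \<and> cox_eq n (\<eta> y0 \<omega>) g"
proof -
  have YP: "premaniplex m FY adjY" and V: "voltage_assignment n m FY adjY \<eta>"
    using VO by (auto simp: voltage_operator_def)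
  have V1: "\<And>y w. y \<in> FY \<Longrightarrow> w \<in> words m \<Longrightarrow> \<eta> y w \<in> words n"
    using V by (auto simp: voltage_assignment_def)
  define cl :: "nat list \<Rightarrow> nat" where "cl w = (LEAST k. \<exists>w'. cox_eq n w w' \<and> to_nat w' = k)" for w
  have cl_ex: "\<exists>w'. cox_eq n w w' \<and> to_nat w' = cl w" if "w \<in> words n" for w
    unfolding cl_def by (rule LeastI[of _ "to_nat w"]) (use that cox_eq.refl in blast)
  have cl_rep: "cox_eq n w (from_nat (cl w))" if "w \<in> words n" for w
    using cl_ex[OF that] by (metis from_nat_to_nat)
  have cl_eq: "cl w = cl v" if "cox_eq n w v" for w v
  proof -
    have "(\<lambda>k. \<exists>w'. cox_eq n w w' \<and> to_nat w' = k) = (\<lambda>k. \<exists>w'. cox_eq n v w' \<and> to_nat w' = k)"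
    proof (intro ext iffI)
      fix k assume "\<exists>w'. cox_eq n w w' \<and> to_nat w' = k"
      then obtain w' where "cox_eq n w w'" "to_nat w' = k" by blast
      then show "\<exists>w'. cox_eq n v w' \<and> to_nat w' = k" using cox_eq.trans[OF cox_eq.sym[OF that]] by blast
    next
      fix k assume "\<exists>w'. cox_eq n v w' \<and> to_nat w' = k"
      then obtain w' where "cox_eq n v w'" "to_nat w' = k" by blast
      then show "\<exists>w'. cox_eq n w w' \<and> to_nat w' = k" using cox_eq.trans[OF that] by blast
    qed
    then show ?thesis unfolding cl_def by simp
  qed
  have cl_inj: "cox_eq n w v" if "w \<in> words n" "v \<in> words n" "cl w = cl v" for w v
  proof -
    have "cox_eq n v (from_nat (cl w))" using cl_rep[OF that(2)] that(3) by simp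
    then show ?thesis using cox_eq.trans[OF cl_rep[OF that(1)] cox_eq.sym] by blast
  qed
  define F' where "F' = cl ` words n"
  define adj' where "adj' i k = cl (i # from_nat k)" for i k
  have act': "act adj' u (cl v) = cl (u @ v)" if "u \<in> words n" "v \<in> words n" for u v
    using that(1)
  proof (induction u)
    case Nil show ?case by simp
  next
    case (Cons i u)
    have uv: "u @ v \<in> words n" using Cons.prems that(2) by simp
    have "cox_eq n ([i] @ from_nat (cl (u @ v)) @ []) ([i] @ (u @ v) @ [])"
      by (rule cox_cong[OF cox_eq.sym[OF cl_rep[OF uv]]]) (use Cons.prems in auto)
    from cl_eq[OF this] have "cl (i # from_nat (cl (u @ v))) = cl (i # u @ v)" by simp
    then show ?case using Cons by (simp add: adj'_def)
  qed
  have a1: "\<forall>i<n. \<forall>x\<in>F'. adj' i x \<in> F' \<and> adj' i (adj' i x) = x"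
  proof (intro allI impI ballI conjI)
    fix i x assume i: "i < n" and x: "x \<in> F'"
    then obtain v where v: "v \<in> words n" "x = cl v" by (auto simp: F'_def)
    have 1: "adj' i x = cl (i # v)" using act'[of "[i]" v] v i by simp
    show "adj' i x \<in> F'" using 1 i v by (auto simp: F'_def)
    have "adj' i (adj' i x) = cl (i # i # v)" using act'[of "[i,i]" v] v i by simp
    also have "\<dots> = cl v" using cl_eq[OF cox_eq.cancel[of "[]" n v i]] v i by simp
    finally show "adj' i (adj' i x) = x" using v by simp
  qed
  have a2: "\<forall>i<n. \<forall>j<n. (i + 2 \<le> j \<or> j + 2 \<le> i) \<longrightarrow> (\<forall>x\<in>F'. adj' i (adj' j (adj' i (adj' j x))) = x)"
  proof (intro allI impI ballI)
    fix i j x assume i: "i < n" "j < n" and f: "i + 2 \<le> j \<or> j + 2 \<le> i" and x: "x \<in> F'"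
    then obtain v where v: "v \<in> words n" "x = cl v" by (auto simp: F'_def)
    have "adj' i (adj' j (adj' i (adj' j x))) = cl (i # j # i # j # v)" using act'[of "[i,j,i,j]" v] v i by simp
    also have "\<dots> = cl v"
    proof -
      have c1: "cox_eq n ([i] @ [j, i] @ (j # v)) ([i] @ [i, j] @ (j # v))"
        by (rule cox_eq.comm) (use i f v in auto)
      have c2: "cox_eq n ([] @ [i, i] @ (j # j # v)) ([] @ (j # j # v))"
        by (rule cox_eq.cancel) (use i v in auto)
      have c3: "cox_eq n ([] @ [j, j] @ v) ([] @ v)"
        by (rule cox_eq.cancel) (use i v in auto)
      have "cox_eq n (i # j # i # j # v) v" using cox_eq.trans[OF c1[simplified] cox_eq.trans[OF c2[simplified] c3[simplified]]] by simp
      then show ?thesis using cl_eq by simp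
    qed
    finally show "adj' i (adj' j (adj' i (adj' j x))) = x" using v by simp
  qed
  have pm: "premaniplex n F' adj'" using a1 a2 by (simp add: premaniplex_def)
  have conn: "connected_pm n F' adj'"
    unfolding connected_pm_def
  proof (intro ballI)
    fix x x' assume "x \<in> F'" "x' \<in> F'"
    then obtain v v' where v: "v \<in> words n" "x = cl v" "v' \<in> words n" "x' = cl v'" by (auto simp: F'_def)
    have "act adj' (v' @ rev v) (cl v) = cl (v' @ rev v @ v)" using act' v by simp
    also have "\<dots> = cl v'"
    proof -
      have "cox_eq n (rev v @ rev (rev v) @ []) []" using cox_cancel_rev[of "rev v" n "[]"] v by simp
      then have "cox_eq n (v' @ (rev v @ v) @ []) (v' @ [] @ [])" using cox_cong[of n "rev v @ v @ []" "[]" v' "[]"] v by simp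
      then show ?thesis using cl_eq by simp
    qed
    finally show "\<exists>w\<in>words n. act adj' w x = x'" using v by (intro bexI[of _ "v' @ rev v"]) auto
  qed
  have "connected_pm m (mix_flags F' FY) (mix_adj adj' adjY \<eta>)"
    using PC pm conn unfolding preserves_connectivity_def by blast
  moreover have "(cl [], y0) \<in> mix_flags F' FY" "(cl g, y0) \<in> mix_flags F' FY"
    using y0 g by (auto simp: mix_flags_def F'_def)
  ultimately obtain \<omega> where om: "\<omega> \<in> words m" "act (mix_adj adj' adjY \<eta>) \<omega> (cl [], y0) = (cl g, y0)"
    unfolding connected_pm_def by blast
  have "act (mix_adj adj' adjY \<eta>) \<omega> (cl [], y0) = (act adj' (\<eta> y0 \<omega>) (cl []), act adjY \<omega> y0)"
    by (rule act_mix[OF pm YP V om(1)]) (use y0 in \<open>auto simp: F'_def\<close>)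
  also have "act adj' (\<eta> y0 \<omega>) (cl []) = cl (\<eta> y0 \<omega>)" using act'[of "\<eta> y0 \<omega>" "[]"] V1 y0 om by simp
  finally have "cl (\<eta> y0 \<omega>) = cl g" "act adjY \<omega> y0 = y0" using om by auto
  then show ?thesis using cl_inj V1 y0 om g by blast
qed



lemma lift_prop:
  fixes n m :: nat
    and FX :: "'a set" and adjX :: "nat \<Rightarrow> 'a \<Rightarrow> 'a" and x0 :: 'a
    and FY :: "'b set" and adjY :: "nat \<Rightarrow> 'b \<Rightarrow> 'b" and y0 :: 'b
    and \<eta> :: "'b \<Rightarrow> nat list \<Rightarrow> nat list"
  assumes X: "premaniplex n FX adjX" "connected_pm n FX adjX" "x0 \<in> FX"
    and Y: "voltage_operator n m FY adjY \<eta>" "preserves_connectivity n m FY adjY \<eta>" "y0 \<in> FY"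
    and nocover: "\<forall>\<upsilon>\<in>words m. \<not> in_normaliser m (stab m adjY y0) \<upsilon> \<longrightarrow>
        (let L = stab m adjY y0;
             \<zeta> = \<eta> y0;
             K = \<zeta> ` (L \<inter> conj_set m L \<upsilon>)
         in \<not> covers n FX adjX (coset_flags n K) (coset_adj n))"
    and G: "is_aut m (mix_flags FX FY) (mix_adj adjX adjY \<eta>) \<gamma>"
    and x: "x \<in> FX" and y: "y \<in> FY"
  shows "snd (\<gamma> (x, y)) = snd (\<gamma> (x0, y))"
proof -
  define P where "P = mix_flags FX FY"
  define M where "M = mix_adj adjX adjY \<eta>"
  define L where "L = stab m adjY y0"
  have YP: "premaniplex m FY adjY" and V: "voltage_assignment n m FY adjY \<eta>"
    using Y(1) by (auto simp: voltage_operator_def)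
  obtain T where T: "spanning_tree m FY adjY T" using Y(1) by (auto simp: voltage_operator_def)
  have V1: "\<And>y w. y \<in> FY \<Longrightarrow> w \<in> words m \<Longrightarrow> \<eta> y w \<in> words n"
    using V by (auto simp: voltage_assignment_def)
  have V2: "\<And>y w w'. y \<in> FY \<Longrightarrow> cox_eq m w w' \<Longrightarrow> cox_eq n (\<eta> y w) (\<eta> y w')"
    using V cox_words unfolding voltage_assignment_def by blast
  have V3: "\<And>y w1 w2. y \<in> FY \<Longrightarrow> w1 \<in> words m \<Longrightarrow> w2 \<in> words m \<Longrightarrow>
     cox_eq n (\<eta> y (w2 @ w1)) (\<eta> (act adjY w1 y) w2 @ \<eta> y w1)"
    using V unfolding voltage_assignment_def by blast
  have AM: "\<And>w x y. w \<in> words m \<Longrightarrow> x \<in> FX \<Longrightarrow> y \<in> FY \<Longrightarrow> act M w (x, y) = (act adjX (\<eta> y w) x, act adjY w y)"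
    unfolding M_def using act_mix[OF X(1) YP V] by blast
  have SM: "\<And>w p. snd (act M w p) = act adjY w (snd p)" unfolding M_def by (rule snd_act_mix)
  have AMcox: "\<And>w w' a b. cox_eq m w w' \<Longrightarrow> a \<in> FX \<Longrightarrow> b \<in> FY \<Longrightarrow> act M w (a, b) = act M w' (a, b)"
  proof -
    fix w w' a b assume c: "cox_eq m w w'" and a: "a \<in> FX" and b: "b \<in> FY"
    have w: "w \<in> words m" "w' \<in> words m" using cox_words[OF c] by auto
    show "act M w (a, b) = act M w' (a, b)"
      using AM[OF w(1) a b] AM[OF w(2) a b] act_cox[OF V2[OF b c] X(1) a] act_cox[OF c YP b] by simp
  qed
  have Mcl: "\<And>i p. i < m \<Longrightarrow> p \<in> P \<Longrightarrow> M i p \<in> P"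
  proof -
    fix i p assume i: "i < m" and p: "p \<in> P"
    then obtain a b where ab: "p = (a, b)" "a \<in> FX" "b \<in> FY" by (auto simp: P_def mix_flags_def)
    have "M i p = act M [i] (a, b)" using ab by simp
    also have "\<dots> = (act adjX (\<eta> b [i]) a, act adjY [i] b)" using AM[of "[i]" a b] ab i by simp
    finally show "M i p \<in> P" using act_closed[OF X(1) V1[OF ab(3), of "[i]"] ab(2)] act_closed[OF YP _ ab(3), of "[i]"] i
      by (simp add: P_def mix_flags_def)
  qed
  have G': "is_aut m P M \<gamma>" using G by (simp add: P_def M_def)
  have GA: "\<And>w p. w \<in> words m \<Longrightarrow> p \<in> P \<Longrightarrow> \<gamma> (act M w p) = act M w (\<gamma> p) \<and> act M w p \<in> P"
    using aut_act[OF G' Mcl] by blast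
  have GP: "\<And>p. p \<in> P \<Longrightarrow> \<gamma> p \<in> P" using G' unfolding is_aut_def bij_betw_def by blast
  have surj: "\<And>g. g \<in> words n \<Longrightarrow> \<exists>\<omega>\<in>words m. act adjY \<omega> y0 = y0 \<and> cox_eq n (\<eta> y0 \<omega>) g"
    using zeta_surj[OF Y] by blast
  define p0 where "p0 = (x0, y0)"
  have p0: "p0 \<in> P" using X(3) Y(3) by (simp add: p0_def P_def mix_flags_def)
  have conn: "\<And>p. p \<in> P \<Longrightarrow> \<exists>w\<in>words m. act M w p0 = p"
  proof -
    fix p assume "p \<in> P"
    then obtain a b where p: "p = (a, b)" "a \<in> FX" "b \<in> FY" by (auto simp: P_def mix_flags_def)
    obtain \<sigma> where \<sigma>: "\<sigma> \<in> words m" "act adjY \<sigma> y0 = b" using tree_conn[OF T Y(3) p(3)] by blast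
    define a' where "a' = act adjX (\<eta> b (rev \<sigma>)) a"
    have a': "a' \<in> FX" using act_closed[OF X(1) V1[OF p(3)] p(2), of "rev \<sigma>"] \<sigma> a'_def by simp
    have z: "act M (rev \<sigma>) (a, b) = (a', y0)"
      using AM[of "rev \<sigma>" a b] \<sigma> p act_rev[OF YP \<sigma>(1) Y(3)] a'_def by simp
    obtain g where g: "g \<in> words n" "act adjX g x0 = a'" using X(2) X(3) a' unfolding connected_pm_def by blast
    obtain \<omega> where \<omega>: "\<omega> \<in> words m" "act adjY \<omega> y0 = y0" "cox_eq n (\<eta> y0 \<omega>) g" using surj g by blast
    have "act M \<omega> p0 = (act adjX (\<eta> y0 \<omega>) x0, y0)" using AM \<omega> X(3) Y(3) by (simp add: p0_def)
    also have "\<dots> = (a', y0)" using act_cox[OF \<omega>(3) X(1) X(3)] g by simp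
    finally have 1: "act M \<omega> p0 = act M (rev \<sigma>) (a, b)" using z by simp
    have "act M \<sigma> (act M (rev \<sigma>) (a, b)) = act M (\<sigma> @ rev \<sigma>) (a, b)" by (simp add: act_append)
    also have "\<dots> = act M [] (a, b)"
      using AMcox[OF _ p(2) p(3)] cox_cancel_rev[of \<sigma> m "[]"] \<sigma> by simp
    finally have "act M (\<sigma> @ \<omega>) p0 = p" using 1 p by (simp add: act_append)
    then show "\<exists>w\<in>words m. act M w p0 = p" using \<sigma> \<omega> by (intro bexI[of _ "\<sigma> @ \<omega>"]) auto
  qed
  obtain \<psi> where \<psi>: "\<psi> \<in> words m" "act M \<psi> p0 = \<gamma> p0" using conn[OF GP[OF p0]] by blast
  define y1 where "y1 = act adjY \<psi> y0"
  have y1: "y1 \<in> FY" using act_closed[OF YP \<psi>(1) Y(3)] y1_def by simp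
  have y1g: "snd (\<gamma> p0) = y1" using \<psi>(2) SM[of \<psi> p0] by (simp add: y1_def p0_def)
  have conjc: "\<And>w. w \<in> words m \<Longrightarrow> (w \<in> conj_set m L (rev \<psi>)) = (act adjY w y1 = y1)"
  proof -
    fix w assume w: "w \<in> words m"
    have "(w \<in> conj_set m L (rev \<psi>)) = (act adjY (rev \<psi>) (act adjY w y1) = y0)"
      using w \<psi> by (simp add: conj_set_def L_def stab_def word_inv_def act_append y1_def)
    also have "\<dots> = (act adjY w y1 = y1)"
    proof
      assume "act adjY (rev \<psi>) (act adjY w y1) = y0"
      then have "act adjY \<psi> (act adjY (rev \<psi>) (act adjY w y1)) = y1" by (simp add: y1_def)
      then show "act adjY w y1 = y1" using act_rev2[OF YP \<psi>(1) act_closed[OF YP w y1]] by simp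
    next
      assume "act adjY w y1 = y1"
      then show "act adjY (rev \<psi>) (act adjY w y1) = y0" using act_rev[OF YP \<psi>(1) Y(3)] by (simp add: y1_def)
    qed
    finally show "(w \<in> conj_set m L (rev \<psi>)) = (act adjY w y1 = y1)" .
  qed
  have Lc: "\<And>w. (w \<in> L) = (w \<in> words m \<and> act adjY w y0 = y0)" by (simp add: L_def stab_def)
  have norm: "in_normaliser m L (rev \<psi>)"
  proof (rule ccontr)
    assume nn: "\<not> in_normaliser m L (rev \<psi>)"
    define K where "K = \<eta> y0 ` (L \<inter> conj_set m L (rev \<psi>))"
    have nc: "\<not> covers n FX adjX (coset_flags n K) (coset_adj n)"
      using nocover nn \<psi>(1) unfolding L_def K_def Let_def by auto
    have Kw: "\<And>k. k \<in> K \<Longrightarrow> k \<in> words n" using V1 Y(3) Lc by (auto simp: K_def)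
    have KK: "\<And>h. h \<in> words n \<Longrightarrow> act adjX h x0 = x0 \<Longrightarrow> \<exists>\<omega>\<in>L \<inter> conj_set m L (rev \<psi>). cox_eq n (\<eta> y0 \<omega>) h"
    proof -
      fix h assume h: "h \<in> words n" "act adjX h x0 = x0"
      obtain \<omega> where \<omega>: "\<omega> \<in> words m" "act adjY \<omega> y0 = y0" "cox_eq n (\<eta> y0 \<omega>) h" using surj h by blast
      have "act M \<omega> p0 = (act adjX (\<eta> y0 \<omega>) x0, y0)" using AM \<omega> X(3) Y(3) by (simp add: p0_def)
      also have "\<dots> = p0" using act_cox[OF \<omega>(3) X(1) X(3)] h by (simp add: p0_def)
      finally have "act M \<omega> p0 = p0" .
      then have "act M \<omega> (\<gamma> p0) = \<gamma> p0" using GA[OF \<omega>(1) p0] by simp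
      then have "act adjY \<omega> y1 = y1" using SM[of \<omega> "\<gamma> p0"] y1g by simp
      then have "\<omega> \<in> L \<inter> conj_set m L (rev \<psi>)" using conjc \<omega> Lc by auto
      then show "\<exists>\<omega>\<in>L \<inter> conj_set m L (rev \<psi>). cox_eq n (\<eta> y0 \<omega>) h" using \<omega> by blast
    qed
    have Kmul: "\<And>\<omega>1 \<omega>2. \<omega>1 \<in> L \<inter> conj_set m L (rev \<psi>) \<Longrightarrow> \<omega>2 \<in> L \<inter> conj_set m L (rev \<psi>) \<Longrightarrow>
        \<omega>1 @ \<omega>2 \<in> L \<inter> conj_set m L (rev \<psi>) \<and> cox_eq n (\<eta> y0 (\<omega>1 @ \<omega>2)) (\<eta> y0 \<omega>1 @ \<eta> y0 \<omega>2)"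
    proof -
      fix \<omega>1 \<omega>2 assume a1: "\<omega>1 \<in> L \<inter> conj_set m L (rev \<psi>)" and a2: "\<omega>2 \<in> L \<inter> conj_set m L (rev \<psi>)"
      have w: "\<omega>1 \<in> words m" "\<omega>2 \<in> words m" using a1 a2 Lc by auto
      have s: "act adjY \<omega>1 y0 = y0" "act adjY \<omega>2 y0 = y0" "act adjY \<omega>1 y1 = y1" "act adjY \<omega>2 y1 = y1"
        using a1 a2 Lc conjc w by auto
      have "\<omega>1 @ \<omega>2 \<in> L \<inter> conj_set m L (rev \<psi>)" using s w Lc conjc by (simp add: act_append)
      moreover have "cox_eq n (\<eta> y0 (\<omega>1 @ \<omega>2)) (\<eta> y0 \<omega>1 @ \<eta> y0 \<omega>2)" using V3[OF Y(3) w(2) w(1)] s by simp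
      ultimately show "\<omega>1 @ \<omega>2 \<in> L \<inter> conj_set m L (rev \<psi>) \<and> cox_eq n (\<eta> y0 (\<omega>1 @ \<omega>2)) (\<eta> y0 \<omega>1 @ \<eta> y0 \<omega>2)" by blast
    qed
    have wd: "\<And>g g'. g \<in> words n \<Longrightarrow> g' \<in> words n \<Longrightarrow> act adjX g x0 = act adjX g' x0 \<Longrightarrow> coset n K g \<subseteq> coset n K g'"
    proof
      fix g g' w' assume g: "g \<in> words n" "g' \<in> words n" "act adjX g x0 = act adjX g' x0" and w': "w' \<in> coset n K g"
      then obtain k1 where k1: "w' \<in> words n" "k1 \<in> K" "cox_eq n w' (g @ k1)" by (auto simp: coset_def)
      obtain \<omega>1 where \<omega>1: "\<omega>1 \<in> L \<inter> conj_set m L (rev \<psi>)" "k1 = \<eta> y0 \<omega>1" using k1 by (auto simp: K_def)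
      define h where "h = rev g' @ g"
      have h: "h \<in> words n" using g by (simp add: h_def)
      have "act adjX h x0 = x0" using g act_rev[OF X(1) g(2) X(3)] by (simp add: h_def act_append)
      then obtain \<omega> where \<omega>: "\<omega> \<in> L \<inter> conj_set m L (rev \<psi>)" "cox_eq n (\<eta> y0 \<omega>) h" using KK h by blast
      from Kmul[OF \<omega>(1) \<omega>1(1)] have m1: "\<omega> @ \<omega>1 \<in> L \<inter> conj_set m L (rev \<psi>)"
        and m2: "cox_eq n (\<eta> y0 (\<omega> @ \<omega>1)) (\<eta> y0 \<omega> @ k1)" using \<omega>1 by auto
      define k2 where "k2 = \<eta> y0 (\<omega> @ \<omega>1)"
      have k2: "k2 \<in> K" using m1 by (simp add: K_def k2_def)
      have k1w: "k1 \<in> words n" using Kw k1 by blast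
      have c1: "cox_eq n ([] @ \<eta> y0 \<omega> @ k1) ([] @ h @ k1)" using cox_cong[OF \<omega>(2) words_Nil k1w] .
      have c2a: "cox_eq n k2 (h @ k1)" using cox_eq.trans[OF m2[folded k2_def] c1[simplified]] .
      have c2: "cox_eq n (g' @ k2 @ []) (g' @ (h @ k1) @ [])"
        using cox_cong[OF c2a g(2) words_Nil] .
      have c3: "cox_eq n (g' @ rev g' @ (g @ k1)) (g @ k1)" using cox_cancel_rev g k1w by simp
      have c2': "cox_eq n (g' @ k2) (g' @ rev g' @ g @ k1)" using c2 by (simp add: h_def)
      have "cox_eq n w' (g' @ k2)"
        by (rule cox_eq.trans[OF k1(3) cox_eq.trans[OF cox_eq.sym[OF c3] cox_eq.sym[OF c2']]])
      then show "w' \<in> coset n K g'" using k1 k2 by (auto simp: coset_def)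
    qed
    define f where "f x = coset n K (SOME g. g \<in> words n \<and> act adjX g x0 = x)" for x
    have fx: "\<And>g. g \<in> words n \<Longrightarrow> f (act adjX g x0) = coset n K g"
    proof -
      fix g assume g: "g \<in> words n"
      let ?g = "SOME g'. g' \<in> words n \<and> act adjX g' x0 = act adjX g x0"
      have "?g \<in> words n \<and> act adjX ?g x0 = act adjX g x0" by (rule someI[of _ g]) (use g in simp)
      then have "coset n K ?g = coset n K g" by (intro subset_antisym wd) (use g in auto)
      then show "f (act adjX g x0) = coset n K g" unfolding f_def by simp
    qed
    have fconn: "\<And>x. x \<in> FX \<Longrightarrow> \<exists>g\<in>words n. act adjX g x0 = x" using X(2) X(3) unfolding connected_pm_def by blast
    have cov: "is_covering n FX adjX (coset_flags n K) (coset_adj n) f"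
      unfolding is_covering_def
    proof (intro conjI allI impI ballI)
      show "f ` FX = coset_flags n K"
      proof
        show "f ` FX \<subseteq> coset_flags n K"
        proof
          fix C assume "C \<in> f ` FX"
          then obtain x where x: "x \<in> FX" "C = f x" by blast
          obtain g where g: "g \<in> words n" "act adjX g x0 = x" using fconn x by blast
          show "C \<in> coset_flags n K" using fx[OF g(1)] g x unfolding coset_flags_def by auto
        qed
        show "coset_flags n K \<subseteq> f ` FX"
        proof
          fix C assume "C \<in> coset_flags n K"
          then obtain \<omega> where om: "\<omega> \<in> words n" "C = coset n K \<omega>" by (auto simp: coset_flags_def)
          have "f (act adjX \<omega> x0) = C" using fx[OF om(1)] om(2) by simp
          moreover have "act adjX \<omega> x0 \<in> FX" using act_closed[OF X(1) om(1) X(3)] .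
          ultimately show "C \<in> f ` FX" by blast
        qed
      qed
    next
      fix i x assume i: "i < n" and x: "x \<in> FX"
      obtain g where g: "g \<in> words n" "act adjX g x0 = x" using fconn x by blast
      have "f (adjX i x) = coset n K (i # g)" using fx[of "i # g"] g i by simp
      also have "\<dots> = coset_adj n i (coset n K g)"
      proof (rule equalityI)
        show "coset n K (i # g) \<subseteq> coset_adj n i (coset n K g)"
        proof
          fix w' assume "w' \<in> coset n K (i # g)"
          then obtain k where k: "w' \<in> words n" "k \<in> K" "cox_eq n w' (i # g @ k)" by (auto simp: coset_def)
          have gk: "g @ k \<in> words n" using k Kw g by auto
          have "cox_eq n (g @ k) (g @ k)" using gk by (rule cox_eq.refl)
          then have "g @ k \<in> coset n K g" using gk k unfolding coset_def by blast
          then show "w' \<in> coset_adj n i (coset n K g)" using k by (auto simp: coset_adj_def)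
        qed
        show "coset_adj n i (coset n K g) \<subseteq> coset n K (i # g)"
        proof
          fix w' assume "w' \<in> coset_adj n i (coset n K g)"
          then obtain w k where k: "w' \<in> words n" "cox_eq n w' (i # w)" "k \<in> K" "cox_eq n w (g @ k)"
            by (auto simp: coset_adj_def coset_def)
          have "cox_eq n ([i] @ w @ []) ([i] @ (g @ k) @ [])" using cox_cong[OF k(4), of "[i]" "[]"] i by simp
          then have "cox_eq n (i # w) (i # g @ k)" by simp
          then have "cox_eq n w' ((i # g) @ k)" using cox_eq.trans[OF k(2)] by simp
          then show "w' \<in> coset n K (i # g)" using k by (auto simp: coset_def)
        qed
      qed
      moreover have "f x = coset n K g" using fx[OF g(1)] g(2) by simp
      ultimately show "f (adjX i x) = coset_adj n i (f x)" by simp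
    qed
    then show False using nc unfolding covers_def by blast
  qed
  have LL: "\<And>l. l \<in> words m \<Longrightarrow> act adjY l y0 = y0 \<Longrightarrow> act adjY l y1 = y1"
  proof -
    fix l assume l: "l \<in> words m" "act adjY l y0 = y0"
    then have "l \<in> L" using Lc by simp
    then have "l \<in> conj_set m L (rev \<psi>)" using norm by (simp add: in_normaliser_def)
    then show "act adjY l y1 = y1" using conjc l by simp
  qed
  have xy: "(x, y) \<in> P" "(x0, y) \<in> P" using x y X(3) by (auto simp: P_def mix_flags_def)
  obtain \<alpha> where \<alpha>: "\<alpha> \<in> words m" "act M \<alpha> p0 = (x, y)" using conn xy by blast
  obtain \<beta> where \<beta>: "\<beta> \<in> words m" "act M \<beta> p0 = (x0, y)" using conn xy by blast
  have ay: "act adjY \<alpha> y0 = y" "act adjY \<beta> y0 = y" using SM[of \<alpha> p0] SM[of \<beta> p0] \<alpha> \<beta> by (auto simp: p0_def)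
  have "act adjY (rev \<beta> @ \<alpha>) y0 = y0" using ay act_rev[OF YP \<beta>(1) Y(3)] by (simp add: act_append)
  then have "act adjY (rev \<beta> @ \<alpha>) y1 = y1" using LL \<alpha> \<beta> by simp
  then have "act adjY \<beta> (act adjY (rev \<beta>) (act adjY \<alpha> y1)) = act adjY \<beta> y1" by (simp add: act_append)
  then have ab: "act adjY \<alpha> y1 = act adjY \<beta> y1" using act_rev2[OF YP \<beta>(1) act_closed[OF YP \<alpha>(1) y1]] by simp
  have "snd (\<gamma> (x, y)) = act adjY \<alpha> y1"
    using GA[OF \<alpha>(1) p0] \<alpha>(2) SM[of \<alpha> "\<gamma> p0"] y1g by simp
  moreover have "snd (\<gamma> (x0, y)) = act adjY \<beta> y1"
    using GA[OF \<beta>(1) p0] \<beta>(2) SM[of \<beta> "\<gamma> p0"] y1g by simp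
  ultimately show ?thesis using ab by simp
qed



theorem theorem6p9:
  fixes n m :: nat
    and FX :: "'a set" and adjX :: "nat \<Rightarrow> 'a \<Rightarrow> 'a" and x0 :: 'a
    and FY :: "'b set" and adjY :: "nat \<Rightarrow> 'b \<Rightarrow> 'b" and y0 :: 'b
    and \<eta> :: "'b \<Rightarrow> nat list \<Rightarrow> nat list"
  assumes X: "premaniplex n FX adjX" "connected_pm n FX adjX" "x0 \<in> FX"
    and Y: "voltage_operator n m FY adjY \<eta>" "preserves_connectivity n m FY adjY \<eta>" "y0 \<in> FY"
    and nocover: "\<forall>\<upsilon>\<in>words m. \<not> in_normaliser m (stab m adjY y0) \<upsilon> \<longrightarrow>
        (let L = stab m adjY y0;
             \<zeta> = \<eta> y0;
             K = \<zeta> ` (L \<inter> conj_set m L \<upsilon>)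
         in \<not> covers n FX adjX (coset_flags n K) (coset_adj n))"
  shows "\<forall>\<gamma>. is_aut m (mix_flags FX FY) (mix_adj adjX adjY \<eta>) \<gamma> \<longrightarrow>
           (\<exists>\<tau>. is_aut m FY adjY \<tau> \<and> is_lift FX FY \<gamma> \<tau>)"
proof (intro allI impI)
  fix \<gamma> assume G: "is_aut m (mix_flags FX FY) (mix_adj adjX adjY \<eta>) \<gamma>"
  define P where "P = mix_flags FX FY"
  define M where "M = mix_adj adjX adjY \<eta>"
  have YP: "premaniplex m FY adjY" and V: "voltage_assignment n m FY adjY \<eta>"
    using Y(1) by (auto simp: voltage_operator_def)
  have V1: "\<And>y w. y \<in> FY \<Longrightarrow> w \<in> words m \<Longrightarrow> \<eta> y w \<in> words n"
    using V by (auto simp: voltage_assignment_def)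
  have GP: "bij_betw \<gamma> P P" and Gc: "\<And>i p. i < m \<Longrightarrow> p \<in> P \<Longrightarrow> \<gamma> (M i p) = M i (\<gamma> p)"
    using G by (auto simp: is_aut_def P_def M_def)
  have Mcl: "\<And>i p. i < m \<Longrightarrow> p \<in> P \<Longrightarrow> M i p \<in> P"
  proof -
    fix i p assume i: "i < m" and p: "p \<in> P"
    then obtain a b where ab: "p = (a, b)" "a \<in> FX" "b \<in> FY" by (auto simp: P_def mix_flags_def)
    have "M i p = (act adjX (\<eta> b [i]) a, adjY i b)" using ab by (simp add: M_def mix_adj_def)
    then show "M i p \<in> P" using act_closed[OF X(1) V1[OF ab(3), of "[i]"] ab(2)] YP i ab
      by (simp add: P_def mix_flags_def premaniplex_def)
  qed
  define \<gamma>' where "\<gamma>' = inv_into P \<gamma>"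
  have GP': "bij_betw \<gamma>' P P" using GP bij_betw_inv_into \<gamma>'_def by blast
  have inj: "inj_on \<gamma> P" and im: "\<gamma> ` P = P" using GP by (auto simp: bij_betw_def)
  have g1: "\<And>p. p \<in> P \<Longrightarrow> \<gamma>' (\<gamma> p) = p" using inj by (simp add: \<gamma>'_def)
  have g2: "\<And>p. p \<in> P \<Longrightarrow> \<gamma> (\<gamma>' p) = p" using im by (simp add: \<gamma>'_def f_inv_into_f)
  have g3: "\<And>p. p \<in> P \<Longrightarrow> \<gamma>' p \<in> P" using GP' by (auto simp: bij_betw_def)
  have g4: "\<And>p. p \<in> P \<Longrightarrow> \<gamma> p \<in> P" using GP by (auto simp: bij_betw_def)
  have G': "is_aut m (mix_flags FX FY) (mix_adj adjX adjY \<eta>) \<gamma>'"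
    unfolding is_aut_def
  proof (intro conjI allI impI ballI)
    show "bij_betw \<gamma>' (mix_flags FX FY) (mix_flags FX FY)" using GP' by (simp add: P_def)
  next
    fix i p assume i: "i < m" and p: "p \<in> mix_flags FX FY"
    then have p': "p \<in> P" by (simp add: P_def)
    have "\<gamma> (M i (\<gamma>' p)) = M i p" using Gc[OF i g3[OF p']] g2[OF p'] by simp
    then have "\<gamma>' (M i p) = \<gamma>' (\<gamma> (M i (\<gamma>' p)))" by simp
    also have "\<dots> = M i (\<gamma>' p)" using g1 Mcl[OF i g3[OF p']] by simp
    finally show "\<gamma>' (mix_adj adjX adjY \<eta> i p) = mix_adj adjX adjY \<eta> i (\<gamma>' p)" by (simp add: M_def)
  qed
  define \<tau> where "\<tau> y = snd (\<gamma> (x0, y))" for y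
  define \<tau>' where "\<tau>' y = snd (\<gamma>' (x0, y))" for y
  have L1: "\<And>x y. x \<in> FX \<Longrightarrow> y \<in> FY \<Longrightarrow> snd (\<gamma> (x, y)) = \<tau> y"
    unfolding \<tau>_def by (rule lift_prop[OF X Y nocover G])
  have L2: "\<And>x y. x \<in> FX \<Longrightarrow> y \<in> FY \<Longrightarrow> snd (\<gamma>' (x, y)) = \<tau>' y"
    unfolding \<tau>'_def by (rule lift_prop[OF X Y nocover G'])
  have inP: "\<And>q. q \<in> P \<Longrightarrow> fst q \<in> FX \<and> snd q \<in> FY" by (auto simp: P_def mix_flags_def)
  have x0y: "\<And>y. y \<in> FY \<Longrightarrow> (x0, y) \<in> P" using X(3) by (simp add: P_def mix_flags_def)
  have tc: "\<And>y. y \<in> FY \<Longrightarrow> \<tau> y \<in> FY" using inP g4 x0y by (simp add: \<tau>_def)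
  have tc': "\<And>y. y \<in> FY \<Longrightarrow> \<tau>' y \<in> FY" using inP g3 x0y by (simp add: \<tau>'_def)
  have t1: "\<And>y. y \<in> FY \<Longrightarrow> \<tau>' (\<tau> y) = y"
  proof -
    fix y assume y: "y \<in> FY"
    obtain a b where ab: "\<gamma> (x0, y) = (a, b)" by fastforce
    have a: "a \<in> FX" "b = \<tau> y" using inP[OF g4[OF x0y[OF y]]] ab by (auto simp: \<tau>_def)
    have "\<tau>' (\<tau> y) = snd (\<gamma>' (a, b))" using L2[OF a(1) tc[OF y]] a by simp
    also have "\<dots> = y" using g1[OF x0y[OF y]] ab by simp
    finally show "\<tau>' (\<tau> y) = y" .
  qed
  have t2: "\<And>y. y \<in> FY \<Longrightarrow> \<tau> (\<tau>' y) = y"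
  proof -
    fix y assume y: "y \<in> FY"
    obtain a b where ab: "\<gamma>' (x0, y) = (a, b)" by fastforce
    have a: "a \<in> FX" "b = \<tau>' y" using inP[OF g3[OF x0y[OF y]]] ab by (auto simp: \<tau>'_def)
    have "\<tau> (\<tau>' y) = snd (\<gamma> (a, b))" using L1[OF a(1) tc'[OF y]] a by simp
    also have "\<dots> = y" using g2[OF x0y[OF y]] ab by simp
    finally show "\<tau> (\<tau>' y) = y" .
  qed
  have bij: "bij_betw \<tau> FY FY"
    by (rule bij_betw_byWitness[of FY \<tau>' \<tau> FY]) (use t1 t2 tc tc' in auto)
  have comm: "\<And>i y. i < m \<Longrightarrow> y \<in> FY \<Longrightarrow> \<tau> (adjY i y) = adjY i (\<tau> y)"
  proof -
    fix i y assume i: "i < m" and y: "y \<in> FY"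
    define a where "a = act adjX (\<eta> y [i]) x0"
    have a: "a \<in> FX" using act_closed[OF X(1) V1[OF y, of "[i]"] X(3)] i a_def by simp
    have ay: "adjY i y \<in> FY" using YP i y by (simp add: premaniplex_def)
    have Mi: "M i (x0, y) = (a, adjY i y)" by (simp add: M_def mix_adj_def a_def)
    have "\<tau> (adjY i y) = snd (\<gamma> (M i (x0, y)))" using L1[OF a ay] Mi by simp
    also have "\<dots> = snd (M i (\<gamma> (x0, y)))" using Gc[OF i x0y[OF y]] by simp
    also have "\<dots> = adjY i (\<tau> y)" by (simp add: M_def mix_adj_def \<tau>_def)
    finally show "\<tau> (adjY i y) = adjY i (\<tau> y)" .
  qed
  have "is_aut m FY adjY \<tau>" using bij comm by (simp add: is_aut_def)
  moreover have "is_lift FX FY \<gamma> \<tau>" using L1 by (simp add: is_lift_def)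
  ultimately show "\<exists>\<tau>. is_aut m FY adjY \<tau> \<and> is_lift FX FY \<gamma> \<tau>" by blast
qed

end
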